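(* For every instance of problem MR, the makespan $\max_{j\in\mathcal J}C_j$ of any optimal schedule is at most $$t_{\max}=\frac{w_{\max}}{w_{\min}}\left(n\,r_{\max}+n(n+1)\left(\frac{|\mathcal T|\cdot v_{\max}^{\beta}}{E}\right)^{\frac{1}{\beta-1}}\right).$$
   Context: Problem MR. There are jobs $\mathcal J=\{1,\dots,n\}$ and processors $\mathcal P=\{1,\dots,m\}$. Job $j$ has weight $w_j>0$, release date $r_j\ge0$, and a nonempty set of Map tasks and a nonempty set of Reduce tasks, preassigned to processors with at most one task of each job per processor; $T_{i,j}$ is the task of job $j$ on processor $i$, with work $v_{i,j}\ge0$; $\mathcal T$ is the set of all tasks and $|\mathcal T|$ its cardinality. A schedule gives each task a start time and a constant speed $s_{i,j}>0$; the task runs non-preemptively for $v_{i,j}/s_{i,j}$ time units and uses energy $v_{i,j}s_{i,j}^{\beta-1}$, where $\beta>1$ is a fixed constant. Feasibility: each processor runs at most one task at a time; tasks of job $j$ start no earlier than $r_j$; Reduce tasks of job $j$ start only after all Map tasks of job $j$ complete; total energy at most a given budget $E>0$. $C_j$ is the maximum completion time of the tasks of job $j$; the objective is to minimize $\sum_j w_jC_j$. $w_{\min}=\min_j w_j$, $w_{\max}=\max_j w_j$, $r_{\max}=\max_j r_j$, $v_{\max}=\max_{i,j}v_{i,j}$. *)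

theory Defs
  imports Complex_Main
begin

text \<open>Jobs are 1..n, processors are 1..m. The task of job j on processor i
  (if any) has kind \<open>kind i j\<close> (Map or Reduce); \<open>kind i j = None\<close> means there is no task.
  Work of task T_ij is \<open>v i j\<close>. A schedule is a pair of functions: start times \<open>S i j\<close> and
  speeds \<open>s i j\<close> (only their values on tasks matter).\<close>

datatype phase = MapTask | ReduceTask

definition tasks :: "nat \<Rightarrow> nat \<Rightarrow> (nat \<Rightarrow> nat \<Rightarrow> phase option) \<Rightarrow> (nat \<times> nat) set" where
  "tasks n m kind = {(i, j). i \<in> {1..m} \<and> j \<in> {1..n} \<and> kind i j \<noteq> None}"

definition valid_instance ::
  "nat \<Rightarrow> nat \<Rightarrow> (nat \<Rightarrow> nat \<Rightarrow> phase option) \<Rightarrow> (nat \<Rightarrow> real) \<Rightarrow> (nat \<Rightarrow> real)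
   \<Rightarrow> (nat \<Rightarrow> nat \<Rightarrow> real) \<Rightarrow> real \<Rightarrow> real \<Rightarrow> bool" where
  "valid_instance n m kind w r v \<beta> E \<longleftrightarrow>
     n \<ge> 1 \<and> \<beta> > 1 \<and> E > 0 \<and>
     (\<forall>j\<in>{1..n}. w j > 0 \<and> r j \<ge> 0 \<and>
        (\<exists>i\<in>{1..m}. kind i j = Some MapTask) \<and>
        (\<exists>i\<in>{1..m}. kind i j = Some ReduceTask)) \<and>
     (\<forall>(i, j)\<in>tasks n m kind. v i j \<ge> 0)"

definition compl :: "(nat \<Rightarrow> nat \<Rightarrow> real) \<Rightarrow> (nat \<Rightarrow> nat \<Rightarrow> real) \<Rightarrow> (nat \<Rightarrow> nat \<Rightarrow> real)
   \<Rightarrow> nat \<Rightarrow> nat \<Rightarrow> real" where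
  "compl v S s i j = S i j + v i j / s i j"

definition job_completion ::
  "nat \<Rightarrow> (nat \<Rightarrow> nat \<Rightarrow> phase option) \<Rightarrow> (nat \<Rightarrow> nat \<Rightarrow> real)
   \<Rightarrow> (nat \<Rightarrow> nat \<Rightarrow> real) \<Rightarrow> (nat \<Rightarrow> nat \<Rightarrow> real) \<Rightarrow> nat \<Rightarrow> real" where
  "job_completion m kind v S s j =
     Max {compl v S s i j | i. i \<in> {1..m} \<and> kind i j \<noteq> None}"

definition energy ::
  "nat \<Rightarrow> nat \<Rightarrow> (nat \<Rightarrow> nat \<Rightarrow> phase option) \<Rightarrow> (nat \<Rightarrow> nat \<Rightarrow> real) \<Rightarrow> real
   \<Rightarrow> (nat \<Rightarrow> nat \<Rightarrow> real) \<Rightarrow> real" where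
  "energy n m kind v \<beta> s = (\<Sum>(i, j)\<in>tasks n m kind. v i j * s i j powr (\<beta> - 1))"

definition feasible ::
  "nat \<Rightarrow> nat \<Rightarrow> (nat \<Rightarrow> nat \<Rightarrow> phase option) \<Rightarrow> (nat \<Rightarrow> real)
   \<Rightarrow> (nat \<Rightarrow> nat \<Rightarrow> real) \<Rightarrow> real \<Rightarrow> real
   \<Rightarrow> (nat \<Rightarrow> nat \<Rightarrow> real) \<Rightarrow> (nat \<Rightarrow> nat \<Rightarrow> real) \<Rightarrow> bool" where
  "feasible n m kind r v \<beta> E S s \<longleftrightarrow>
     (\<forall>(i, j)\<in>tasks n m kind. s i j > 0 \<and> S i j \<ge> r j) \<and>
     (\<forall>i j j'. (i, j) \<in> tasks n m kind \<and> (i, j') \<in> tasks n m kind \<and> j \<noteq> j' \<longrightarrow>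
        compl v S s i j \<le> S i j' \<or> compl v S s i j' \<le> S i j) \<and>
     (\<forall>j\<in>{1..n}. \<forall>i\<in>{1..m}. \<forall>i'\<in>{1..m}.
        kind i j = Some MapTask \<and> kind i' j = Some ReduceTask \<longrightarrow> compl v S s i j \<le> S i' j) \<and>
     energy n m kind v \<beta> s \<le> E"

definition objective ::
  "nat \<Rightarrow> nat \<Rightarrow> (nat \<Rightarrow> nat \<Rightarrow> phase option) \<Rightarrow> (nat \<Rightarrow> real) \<Rightarrow> (nat \<Rightarrow> nat \<Rightarrow> real)
   \<Rightarrow> (nat \<Rightarrow> nat \<Rightarrow> real) \<Rightarrow> (nat \<Rightarrow> nat \<Rightarrow> real) \<Rightarrow> real" where
  "objective n m kind w v S s = (\<Sum>j\<in>{1..n}. w j * job_completion m kind v S s j)"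

definition optimal ::
  "nat \<Rightarrow> nat \<Rightarrow> (nat \<Rightarrow> nat \<Rightarrow> phase option) \<Rightarrow> (nat \<Rightarrow> real) \<Rightarrow> (nat \<Rightarrow> real)
   \<Rightarrow> (nat \<Rightarrow> nat \<Rightarrow> real) \<Rightarrow> real \<Rightarrow> real
   \<Rightarrow> (nat \<Rightarrow> nat \<Rightarrow> real) \<Rightarrow> (nat \<Rightarrow> nat \<Rightarrow> real) \<Rightarrow> bool" where
  "optimal n m kind w r v \<beta> E S s \<longleftrightarrow>
     feasible n m kind r v \<beta> E S s \<and>
     (\<forall>S' s'. feasible n m kind r v \<beta> E S' s' \<longrightarrow>
        objective n m kind w v S s \<le> objective n m kind w v S' s')"

end

theory Submission
  imports Defs
begin

lemma sum_real_id: "(\<Sum>j\<in>{1..n::nat}. real j) = real n * (real n + 1) / 2"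
  by (induction n) (auto simp: field_simps)

lemma sum_bound: "(\<Sum>j\<in>{1..n::nat}. (a::real) + 2 * real j * D) = real n * a + real n * (real n + 1) * D"
proof -
  have "(\<Sum>j\<in>{1..n::nat}. a + 2 * real j * D) = real n * a + 2 * D * (\<Sum>j\<in>{1..n}. real j)"
    by (simp add: sum.distrib sum_distrib_left sum_distrib_right mult.commute mult.left_commute)
  moreover have "2 * D * (\<Sum>j\<in>{1..n}. real j) = real n * (real n + 1) * D"
    by (simp only: sum_real_id) (simp add: field_simps)
  ultimately show ?thesis by linarith
qed

theorem proposition1:
  fixes n m :: nat and kind :: "nat \<Rightarrow> nat \<Rightarrow> phase option"
    and w r :: "nat \<Rightarrow> real" and v :: "nat \<Rightarrow> nat \<Rightarrow> real" and \<beta> E :: real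
    and S s :: "nat \<Rightarrow> nat \<Rightarrow> real"
  assumes "valid_instance n m kind w r v \<beta> E"
    and "optimal n m kind w r v \<beta> E S s"
  shows "Max (job_completion m kind v S s ` {1..n})
    \<le> (Max (w ` {1..n}) / Min (w ` {1..n})) *
       (real n * Max (r ` {1..n})
        + real n * (real n + 1) *
          ((real (card (tasks n m kind)) * (Max ((\<lambda>(i, j). v i j) ` tasks n m kind)) powr \<beta>) / E)
            powr (1 / (\<beta> - 1)))"
proof -
  let ?T = "tasks n m kind"
  define vmax where "vmax = Max ((\<lambda>(i, j). v i j) ` ?T)"
  define rmax where "rmax = Max (r ` {1..n})"
  define X where "X = real (card ?T) * vmax powr \<beta> / E"
  define D where "D = X powr (1 / (\<beta> - 1))"
  define \<sigma> where "\<sigma> = (if vmax = 0 then 1 else vmax / D)"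
  define S' where "S' = (\<lambda>i j. if kind i j = Some MapTask then rmax + (2 * real j - 2) * D
                                else rmax + (2 * real j - 1) * D)"
  define s' where "s' = (\<lambda>(i::nat) (j::nat). \<sigma>)"
  note V = assms(1)[unfolded valid_instance_def]
  have n1: "n \<ge> 1" and b1: "\<beta> > 1" and E0: "E > 0" using V by auto
  have jobs: "\<And>j. j \<in> {1..n} \<Longrightarrow> w j > 0 \<and> r j \<ge> 0 \<and>
        (\<exists>i\<in>{1..m}. kind i j = Some MapTask) \<and> (\<exists>i\<in>{1..m}. kind i j = Some ReduceTask)"
    using V by auto
  have vnn: "\<And>i j. (i, j) \<in> ?T \<Longrightarrow> v i j \<ge> 0" using V by auto
  have finT: "finite ?T"
    by (rule finite_subset[of _ "{1..m} \<times> {1..n}"]) (auto simp: tasks_def)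
  obtain i0 where i0: "i0 \<in> {1..m}" "kind i0 1 = Some MapTask" using jobs[of 1] n1 by auto
  have T0: "(i0, 1) \<in> ?T" using i0 n1 by (auto simp: tasks_def)
  have vle: "\<And>i j. (i, j) \<in> ?T \<Longrightarrow> v i j \<le> vmax"
    unfolding vmax_def by (rule Max_ge) (use finT in auto)
  have vmax0: "vmax \<ge> 0" using vle[OF T0] vnn[OF T0] by linarith
  have rle: "\<And>j. j \<in> {1..n} \<Longrightarrow> r j \<le> rmax"
    unfolding rmax_def by (rule Max_ge) auto
  have rmax0: "rmax \<ge> 0" using rle[of 1] jobs[of 1] n1 by auto
  have D0: "D \<ge> 0" unfolding D_def by simp
  have cardpos: "card ?T > 0" using finT T0 card_gt_0_iff by blast
  have sig0: "\<sigma> > 0"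
  proof (cases "vmax = 0")
    case False
    then have "vmax > 0" using vmax0 by auto
    then have "X > 0" unfolding X_def using cardpos E0 by auto
    then have "D > 0" unfolding D_def by simp
    then show ?thesis using \<open>vmax > 0\<close> by (simp add: \<sigma>_def)
  qed (simp add: \<sigma>_def)
  have dur: "\<And>i j. (i, j) \<in> ?T \<Longrightarrow> v i j / \<sigma> \<le> D"
  proof -
    fix i j assume ij: "(i, j) \<in> ?T"
    show "v i j / \<sigma> \<le> D"
    proof (cases "vmax = 0")
      case True
      then show ?thesis using vle[OF ij] vnn[OF ij] D0 by (simp add: \<sigma>_def)
    next
      case False
      then have vp: "vmax > 0" using vmax0 by auto
      have "v i j / \<sigma> = v i j * D / vmax" using False by (simp add: \<sigma>_def)
      also have "\<dots> \<le> vmax * D / vmax"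
        by (intro divide_right_mono mult_right_mono) (use vle[OF ij] D0 vp in auto)
      also have "\<dots> = D" using vp by simp
      finally show ?thesis .
    qed
  qed
  have en: "energy n m kind v \<beta> s' \<le> E"
  proof -
    have "energy n m kind v \<beta> s' = (\<Sum>(i, j)\<in>?T. v i j * \<sigma> powr (\<beta> - 1))"
      by (simp add: energy_def s'_def)
    also have "\<dots> \<le> (\<Sum>(i, j)\<in>?T. vmax * \<sigma> powr (\<beta> - 1))"
      by (rule sum_mono) (auto intro: mult_right_mono vle)
    also have "\<dots> = real (card ?T) * vmax * \<sigma> powr (\<beta> - 1)" by simp
    also have "\<dots> \<le> E"
    proof (cases "vmax = 0")
      case True then show ?thesis using E0 by simp
    next
      case False
      then have vp: "vmax > 0" using vmax0 by auto
      then have Xp: "X > 0" unfolding X_def using cardpos E0 by auto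
      then have Dp: "D > 0" unfolding D_def by simp
      have DX: "D powr (\<beta> - 1) = X" unfolding D_def using b1 Xp
        by (simp add: powr_powr)
      have "\<sigma> powr (\<beta> - 1) = vmax powr (\<beta> - 1) / X"
        using False vp Dp DX by (simp add: \<sigma>_def powr_divide)
      moreover have "vmax * vmax powr (\<beta> - 1) = vmax powr \<beta>"
      proof -
        have "vmax powr \<beta> = vmax powr (1 + (\<beta> - 1))" by simp
        also have "\<dots> = vmax * vmax powr (\<beta> - 1)" using vp by (simp only: powr_add powr_one_gt_zero_iff) simp
        finally show ?thesis by simp
      qed
      ultimately have "real (card ?T) * vmax * \<sigma> powr (\<beta> - 1) = real (card ?T) * vmax powr \<beta> / X"
        by (simp add: field_simps)
      also have "\<dots> = E" using Xp E0 cardpos False unfolding X_def by (simp add: field_simps)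
      finally show ?thesis by simp
    qed
    finally show ?thesis .
  qed
  have cub: "\<And>i j. (i, j) \<in> ?T \<Longrightarrow> compl v S' s' i j \<le> rmax + 2 * real j * D"
    using dur D0 by (fastforce simp: compl_def S'_def s'_def algebra_simps)
  have slb: "\<And>i j. S' i j \<ge> rmax + (2 * real j - 2) * D"
    using D0 by (simp add: S'_def algebra_simps)
  have feas: "feasible n m kind r v \<beta> E S' s'"
    unfolding feasible_def
  proof (intro conjI)
    show "\<forall>(i, j)\<in>?T. 0 < s' i j \<and> r j \<le> S' i j"
    proof (clarify, intro conjI)
      fix i j assume "(i, j) \<in> ?T"
      then have j: "j \<in> {1..n}" by (auto simp: tasks_def)
      show "0 < s' i j" using sig0 by (simp add: s'_def)
      have "real j \<ge> 1" using j by auto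
      then have "0 \<le> (2 * real j - 2) * D" using D0 by simp
      then show "r j \<le> S' i j" using slb[where i=i and j=j] rle[OF j] by linarith
    qed
    show "\<forall>i j j'. (i, j) \<in> ?T \<and> (i, j') \<in> ?T \<and> j \<noteq> j' \<longrightarrow>
        compl v S' s' i j \<le> S' i j' \<or> compl v S' s' i j' \<le> S' i j"
    proof (intro allI impI)
      fix i j j' assume h: "(i, j) \<in> ?T \<and> (i, j') \<in> ?T \<and> j \<noteq> j'"
      show "compl v S' s' i j \<le> S' i j' \<or> compl v S' s' i j' \<le> S' i j"
      proof (cases "j < j'")
        case True
        then have "real j' \<ge> real j + 1" by simp
        then have "2 * real j * D \<le> (2 * real j' - 2) * D" using D0
          by (intro mult_right_mono) auto
        then show ?thesis using cub[where i=i and j=j] slb[where i=i and j=j'] h by auto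
      next
        case False
        then have "real j \<ge> real j' + 1" using h by simp
        then have "2 * real j' * D \<le> (2 * real j - 2) * D" using D0
          by (intro mult_right_mono) auto
        then show ?thesis using cub[where i=i and j=j'] slb[where i=i and j=j] h by auto
      qed
    qed
    show "\<forall>j\<in>{1..n}. \<forall>i\<in>{1..m}. \<forall>i'\<in>{1..m}.
        kind i j = Some MapTask \<and> kind i' j = Some ReduceTask \<longrightarrow> compl v S' s' i j \<le> S' i' j"
    proof (intro ballI impI)
      fix j i i' assume "j \<in> {1..n}" "i \<in> {1..m}" "i' \<in> {1..m}"
        "kind i j = Some MapTask \<and> kind i' j = Some ReduceTask"
      then have ij: "(i, j) \<in> ?T" and k: "kind i j = Some MapTask" "kind i' j = Some ReduceTask"
        by (auto simp: tasks_def)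
      have "compl v S' s' i j = rmax + (2 * real j - 2) * D + v i j / \<sigma>"
        using k by (simp add: compl_def S'_def s'_def)
      also have "\<dots> \<le> rmax + (2 * real j - 2) * D + D" using dur[OF ij] by simp
      also have "\<dots> = S' i' j" using k by (simp add: S'_def algebra_simps)
      finally show "compl v S' s' i j \<le> S' i' j" .
    qed
    show "energy n m kind v \<beta> s' \<le> E" by (rule en)
  qed
  define B where "B = real n * rmax + real n * (real n + 1) * D"
  define wmax where "wmax = Max (w ` {1..n})"
  define wmin where "wmin = Min (w ` {1..n})"
  have wle: "\<And>j. j \<in> {1..n} \<Longrightarrow> w j \<le> wmax" unfolding wmax_def by (rule Max_ge) auto
  have wge: "\<And>j. j \<in> {1..n} \<Longrightarrow> wmin \<le> w j" unfolding wmin_def by (rule Min_le) auto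
  have wminp: "wmin > 0"
  proof -
    have "wmin \<in> w ` {1..n}" unfolding wmin_def using n1 by (intro Min_in) auto
    then show ?thesis using jobs by auto
  qed
  have jcset: "\<And>j. j \<in> {1..n} \<Longrightarrow> finite {compl v S' s' i j | i. i \<in> {1..m} \<and> kind i j \<noteq> None}
      \<and> {compl v S' s' i j | i. i \<in> {1..m} \<and> kind i j \<noteq> None} \<noteq> {}"
  proof -
    fix j assume j: "j \<in> {1..n}"
    then obtain i where "i \<in> {1..m}" "kind i j = Some MapTask" using jobs by blast
    then show "?thesis j" by auto
  qed
  have jc': "\<And>j. j \<in> {1..n} \<Longrightarrow> job_completion m kind v S' s' j \<le> rmax + 2 * real j * D"
  proof -
    fix j assume j: "j \<in> {1..n}"
    show "job_completion m kind v S' s' j \<le> rmax + 2 * real j * D"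
      unfolding job_completion_def
    proof (subst Max_le_iff)
      show "\<forall>a\<in>{compl v S' s' i j |i. i \<in> {1..m} \<and> kind i j \<noteq> None}. a \<le> rmax + 2 * real j * D"
        using cub j by (auto simp: tasks_def)
    qed (use jcset[OF j] in auto)
  qed
  have obj': "objective n m kind w v S' s' \<le> wmax * B"
  proof -
    have "objective n m kind w v S' s' \<le> (\<Sum>j\<in>{1..n}. wmax * (rmax + 2 * real j * D))"
      unfolding objective_def
    proof (rule sum_mono)
      fix j assume j: "j \<in> {1..n}"
      have "w j * job_completion m kind v S' s' j \<le> w j * (rmax + 2 * real j * D)"
        using jc'[OF j] jobs[OF j] by (intro mult_left_mono) auto
      also have "\<dots> \<le> wmax * (rmax + 2 * real j * D)"
        using wle[OF j] rmax0 D0 by (intro mult_right_mono) auto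
      finally show "w j * job_completion m kind v S' s' j \<le> wmax * (rmax + 2 * real j * D)" .
    qed
    also have "\<dots> = wmax * B" unfolding B_def sum_distrib_left[symmetric] sum_bound[where n=n and a=rmax and D=D] ..
    finally show ?thesis .
  qed
  note O = assms(2)[unfolded optimal_def]
  have objle: "objective n m kind w v S s \<le> wmax * B" using O feas obj' by force
  note F = O[THEN conjunct1, unfolded feasible_def]
  have jcnn: "\<And>j. j \<in> {1..n} \<Longrightarrow> job_completion m kind v S s j \<ge> 0"
  proof -
    fix j assume j: "j \<in> {1..n}"
    obtain i where i: "i \<in> {1..m}" "kind i j = Some MapTask" using jobs[OF j] by auto
    have ij: "(i, j) \<in> ?T" using i j by (auto simp: tasks_def)
    have "compl v S s i j \<ge> 0"
    proof -
      have "s i j > 0" "S i j \<ge> r j" using F ij by auto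
      moreover have "v i j \<ge> 0" using vnn[OF ij] .
      ultimately show ?thesis using jobs[OF j] by (simp add: compl_def)
    qed
    also have "compl v S s i j \<le> job_completion m kind v S s j"
      unfolding job_completion_def
    proof (rule Max_ge)
      show "finite {compl v S s i j |i. i \<in> {1..m} \<and> kind i j \<noteq> None}" by auto
    qed (use i in auto)
    finally show "job_completion m kind v S s j \<ge> 0" .
  qed
  obtain k where k: "k \<in> {1..n}" "Max (job_completion m kind v S s ` {1..n}) = job_completion m kind v S s k"
  proof -
    have "Max (job_completion m kind v S s ` {1..n}) \<in> job_completion m kind v S s ` {1..n}"
      using n1 by (intro Max_in) auto
    then show ?thesis using that by auto
  qed
  have "wmin * job_completion m kind v S s k \<le> w k * job_completion m kind v S s k"
    using wge[OF k(1)] jcnn[OF k(1)] by (intro mult_right_mono) auto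
  also have "\<dots> \<le> objective n m kind w v S s"
    unfolding objective_def
    by (rule member_le_sum) (use k(1) jcnn jobs in \<open>auto intro: mult_nonneg_nonneg less_imp_le\<close>)
  also have "\<dots> \<le> wmax * B" by (rule objle)
  finally have "job_completion m kind v S s k \<le> wmax * B / wmin"
    using wminp by (simp add: field_simps)
  then show ?thesis using k(2)
    by (simp add: B_def wmax_def wmin_def rmax_def D_def X_def vmax_def)
qed

end
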